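(* Under the setting below, let $\lambda^\dagger=\inf\{\lambda\ge 0: A(\lambda)\le Q\}$ (with $\inf\emptyset=+\infty$) and $\lambda^*=\min(\pi,\lambda^\dagger)$. Then the primal point $(x_t^*,z_t^* )=W_t(\lambda^* )$ for all $t$, together with $s^*=\max\big(0,\sum_{t=1}^T\tilde h_t(x_t^*,z_t^* )-Q\big)$ and the shadow price $\lambda^*$ as multiplier of (C) (and suitable nonnegative multipliers for the other constraints), satisfies the KKT conditions of (P).
   Context: Fix an integer $T\ge 1$, a data cap $Q>0$ and an overage fee $\pi>0$. For each $t\in\{1,\dots,T\}$ fix reals $d_t\ge 0$, $r_t\ge 0$, $c_t>0$, $p_t>0$, $\theta_t>0$, $\beta_t>0$ and functions $u_t,e_t:[0,\infty)\to\mathbb{R}$ such that: $u_t$ is continuous, increasing and strictly concave, differentiable on $(0,\infty)$, and $u_t':(0,\infty)\to(0,\infty)$ is a strictly decreasing bijection with inverse $u_t'^{-1}$; $e_t$ is increasing, strictly convex and continuously differentiable, and $e_t':[0,\infty)\to[0,\infty)$ is a strictly increasing bijection with inverse $e_t'^{-1}$. For $0\le z\le x\le 1$ let $\tilde f_t(x,z)=\theta_t u_t(x)-\beta_t e_t((x-z)c_t)-p_t c_t z$ and $\tilde h_t(x,z)=d_t x+r_t z$. Problem (P): maximize $\sum_{t=1}^T \tilde f_t(x_t,z_t)-\pi s$ over $x,z\in\mathbb{R}^T$, $s\in\mathbb{R}$, subject to $0\le z_t\le x_t\le 1$ for all $t$, $s\ge 0$, and (C): $s\ge \sum_{t=1}^T\tilde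 h_t(x_t,z_t)-Q$. A KKT point of (P) consists of a feasible $(x^*,z^*,s^* )$ and nonnegative Lagrange multipliers for all constraints satisfying stationarity of the Lagrangian and complementary slackness; $\lambda^*$ denotes the multiplier of (C) (the shadow price of wireless data). For $\lambda\ge 0$ and $\beta>0$ write $a_t(\beta,\lambda)=\frac{1}{c_t}\,e_t'^{-1}\!\Big(\frac{p_tc_t+r_t\lambda}{\beta c_t}\Big)$ and $X_t(\lambda)=p_tc_t+(d_t+r_t)\lambda$. Define the sets (all with $\beta>0$): $\Omega^{I}_t(\lambda)=\{(\beta,\theta):\theta>\frac{\beta c_t e_t'(c_t)+d_t\lambda}{u_t'(1)},\ \beta<\frac{p_tc_t+r_t\lambda}{c_te_t'(c_t)}\}$; $\Omega^{II}_t(\lambda)=\{(\beta,\theta):\theta>\frac{X_t(\lambda)}{u_t'(1)},\ \beta\ge\frac{p_tc_t+r_t\lambda}{c_te_t'(c_t)}\}$; $\Omega^{III}_t(\lambda)=\{(\beta,\theta):\frac{X_t(\lambda)}{u_t'(a_t(\beta,\lambda))}\le\theta\le\frac{X_t(\lambda)}{u_t'(1)}\}$; $\Omega^{IV}_t(\lambda)=\{(\beta,\theta):\theta<\frac{X_t(\lambda)}{u_t'(a_t(\beta,\lambda))},\ \theta\le\frac{\beta c_te_t'(c_t)+d_t\lambda}{u_t'(1)}\}$. Let $z^{II}_t(\lambda)=1-a_t(\beta_t,\lambda)$, $x^{III}_t(\lambda)=u_t'^{-1}(X_t(\lambda)/\theta_t)$, $z^{III}_t(\lambda)=x^{III}_t(\lambda)-a_t(\beta_t,\lambda)$,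 and let $x^{IV}_t(\lambda)\in(0,1]$ be the solution of $\theta_tu_t'(x)-\beta_tc_te_t'(xc_t)=d_t\lambda$. Define $W_t(\lambda)=(1,0)$ if $(\beta_t,\theta_t)\in\Omega^I_t(\lambda)$; $(1,z^{II}_t(\lambda))$ if in $\Omega^{II}_t(\lambda)$; $(x^{III}_t(\lambda),z^{III}_t(\lambda))$ if in $\Omega^{III}_t(\lambda)$; $(x^{IV}_t(\lambda),0)$ if in $\Omega^{IV}_t(\lambda)$. Define the potential data usage $A(\lambda)=\sum_{t=1}^T\tilde h_t(W_t(\lambda))$. *)

theory Defs
  imports "HOL-Analysis.Analysis"
begin

definition strictly_concave_on :: "real set \<Rightarrow> (real \<Rightarrow> real) \<Rightarrow> bool" where
  "strictly_concave_on S f \<longleftrightarrow> (\<forall>x\<in>S. \<forall>y\<in>S. \<forall>a::real. x \<noteq> y \<and> 0 < a \<and> a < 1 \<longrightarrow>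
       f (a * x + (1 - a) * y) > a * f x + (1 - a) * f y)"

definition strictly_convex_on :: "real set \<Rightarrow> (real \<Rightarrow> real) \<Rightarrow> bool" where
  "strictly_convex_on S f \<longleftrightarrow> (\<forall>x\<in>S. \<forall>y\<in>S. \<forall>a::real. x \<noteq> y \<and> 0 < a \<and> a < 1 \<longrightarrow>
       f (a * x + (1 - a) * y) < a * f x + (1 - a) * f y)"

definition a_fn :: "(nat \<Rightarrow> real \<Rightarrow> real) \<Rightarrow> (nat \<Rightarrow> real) \<Rightarrow> (nat \<Rightarrow> real) \<Rightarrow> (nat \<Rightarrow> real)
    \<Rightarrow> nat \<Rightarrow> real \<Rightarrow> real \<Rightarrow> real" where
  "a_fn e' p c r t \<beta> l = (1 / c t) * inv_into {0..} (e' t) ((p t * c t + r t * l) / (\<beta> * c t))"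

definition X_fn :: "(nat \<Rightarrow> real) \<Rightarrow> (nat \<Rightarrow> real) \<Rightarrow> (nat \<Rightarrow> real) \<Rightarrow> (nat \<Rightarrow> real)
    \<Rightarrow> nat \<Rightarrow> real \<Rightarrow> real" where
  "X_fn p c d r t l = p t * c t + (d t + r t) * l"

definition Omega_I where
  "Omega_I u' e' p c d r t l \<beta> \<theta> \<longleftrightarrow> \<beta> > 0 \<and>
     \<theta> > (\<beta> * c t * e' t (c t) + d t * l) / u' t 1 \<and>
     \<beta> < (p t * c t + r t * l) / (c t * e' t (c t))"

definition Omega_II where
  "Omega_II u' e' p c d r t l \<beta> \<theta> \<longleftrightarrow> \<beta> > 0 \<and>
     \<theta> > X_fn p c d r t l / u' t 1 \<and>
     \<beta> \<ge> (p t * c t + r t * l) / (c t * e' t (c t))"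

definition Omega_III where
  "Omega_III u' e' p c d r t l \<beta> \<theta> \<longleftrightarrow> \<beta> > 0 \<and>
     X_fn p c d r t l / u' t (a_fn e' p c r t \<beta> l) \<le> \<theta> \<and>
     \<theta> \<le> X_fn p c d r t l / u' t 1"

definition Omega_IV where
  "Omega_IV u' e' p c d r t l \<beta> \<theta> \<longleftrightarrow> \<beta> > 0 \<and>
     \<theta> < X_fn p c d r t l / u' t (a_fn e' p c r t \<beta> l) \<and>
     \<theta> \<le> (\<beta> * c t * e' t (c t) + d t * l) / u' t 1"

definition xIV where
  "xIV u' e' c d \<theta> \<beta> t l = (THE x. 0 < x \<and> x \<le> 1 \<and>
      \<theta> t * u' t x - \<beta> t * c t * e' t (x * c t) = d t * l)"

definition W where
  "W u' e' p c d r \<theta> \<beta> t l =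
    (if Omega_I u' e' p c d r t l (\<beta> t) (\<theta> t) then (1, 0)
     else if Omega_II u' e' p c d r t l (\<beta> t) (\<theta> t) then (1, 1 - a_fn e' p c r t (\<beta> t) l)
     else if Omega_III u' e' p c d r t l (\<beta> t) (\<theta> t) then
       (let x = inv_into {0<..} (u' t) (X_fn p c d r t l / \<theta> t)
        in (x, x - a_fn e' p c r t (\<beta> t) l))
     else if Omega_IV u' e' p c d r t l (\<beta> t) (\<theta> t) then (xIV u' e' c d \<theta> \<beta> t l, 0)
     else undefined)"

definition h_fn :: "(nat \<Rightarrow> real) \<Rightarrow> (nat \<Rightarrow> real) \<Rightarrow> nat \<Rightarrow> real \<times> real \<Rightarrow> real" where
  "h_fn d r t xz = d t * fst xz + r t * snd xz"

definition A_fn where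
  "A_fn T u' e' p c d r \<theta> \<beta> l = (\<Sum>t=1..T. h_fn d r t (W u' e' p c d r \<theta> \<beta> t l))"

definition lambda_star where
  "lambda_star T Q \<pi> u' e' p c d r \<theta> \<beta> =
    (let S = {l::real. 0 \<le> l \<and> A_fn T u' e' p c d r \<theta> \<beta> l \<le> Q}
     in if S = {} then \<pi> else min \<pi> (Inf S))"

(* Multipliers: mu t for z_t >= 0, nu t for z_t <= x_t, kappa t for x_t <= 1,
   rho for s >= 0, lam for (C).  Lagrangian (maximisation):
   L = sum f~_t - pi s + sum mu_t z_t + sum nu_t (x_t - z_t) + sum kappa_t (1 - x_t) + rho s
       + lam (s - sum h~_t + Q).
   Stationarity written with the partial derivatives of L (u' and e' are the derivatives of u, e). *)
definition is_KKT where
  "is_KKT T Q \<pi> u' e' p c d r \<theta> \<beta> x z s mu nu kappa rho lam \<longleftrightarrow>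
    (\<forall>t\<in>{1..T}. 0 \<le> z t \<and> z t \<le> x t \<and> x t \<le> 1) \<and> 0 \<le> s \<and>
    s \<ge> (\<Sum>t=1..T. h_fn d r t (x t, z t)) - Q \<and>
    (\<forall>t\<in>{1..T}. 0 \<le> mu t \<and> 0 \<le> nu t \<and> 0 \<le> kappa t) \<and> 0 \<le> rho \<and> 0 \<le> lam \<and>
    (\<forall>t\<in>{1..T}.
       \<theta> t * u' t (x t) - \<beta> t * c t * e' t ((x t - z t) * c t) + nu t - kappa t - lam * d t = 0 \<and>
       \<beta> t * c t * e' t ((x t - z t) * c t) - p t * c t + mu t - nu t - lam * r t = 0) \<and>
    - \<pi> + rho + lam = 0 \<and>
    (\<forall>t\<in>{1..T}. mu t * z t = 0 \<and> nu t * (x t - z t) = 0 \<and> kappa t * (1 - x t) = 0) \<and>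
    rho * s = 0 \<and> lam * (s - (\<Sum>t=1..T. h_fn d r t (x t, z t)) + Q) = 0"

end

theory Submission
  imports Defs
begin

lemma decr_bij_isCont:
  fixes f :: "real \<Rightarrow> real"
  assumes bij: "bij_betw f {0<..} {0<..}"
    and dec: "\<And>x y. 0 < x \<Longrightarrow> x < y \<Longrightarrow> f y < f x"
    and x0: "0 < x0"
  shows "isCont f x0"
proof -
  have fpos: "\<And>x. 0 < x \<Longrightarrow> 0 < f x" using bij by (auto simp: bij_betw_def)
  have inv: "\<And>v. 0 < v \<Longrightarrow> 0 < inv_into {0<..} f v \<and> f (inv_into {0<..} f v) = v"
  proof -
    fix v :: real assume "0 < v"
    then have "v \<in> f ` {0<..}" using bij by (auto simp: bij_betw_def)
    then show "0 < inv_into {0<..} f v \<and> f (inv_into {0<..} f v) = v"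
      using inv_into_into[of v f "{0<..}"] f_inv_into_f[of v f "{0<..}"] by auto
  qed
  let ?v = "f x0"
  have vpos: "0 < ?v" using fpos x0 by auto
  show ?thesis
    unfolding continuous_at_eps_delta
  proof (intro allI impI)
    fix \<epsilon> :: real assume ep: "0 < \<epsilon>"
    define y2 where "y2 = inv_into {0<..} f (?v + \<epsilon>)"
    have y2: "0 < y2" "f y2 = ?v + \<epsilon>" using inv[of "?v + \<epsilon>"] vpos ep by (auto simp: y2_def)
    have y2x: "y2 < x0"
    proof (rule ccontr)
      assume "\<not> y2 < x0"
      then have "y2 = x0 \<or> x0 < y2" by auto
      then show False using dec[OF x0, of y2] y2 ep by auto
    qed
    obtain y1 where y1: "x0 < y1" "\<And>x. 0 < x \<Longrightarrow> x < y1 \<Longrightarrow> ?v - \<epsilon> < f x"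
    proof (cases "0 < ?v - \<epsilon>")
      case True
      define y1 where "y1 = inv_into {0<..} f (?v - \<epsilon>)"
      have h: "0 < y1" "f y1 = ?v - \<epsilon>" using inv[of "?v - \<epsilon>"] True by (auto simp: y1_def)
      have "x0 < y1"
      proof (rule ccontr)
        assume "\<not> x0 < y1"
        then have "y1 = x0 \<or> y1 < x0" by auto
        then show False using dec[OF h(1), of x0] h ep by auto
      qed
      moreover have "\<And>x. 0 < x \<Longrightarrow> x < y1 \<Longrightarrow> ?v - \<epsilon> < f x" using dec h by fastforce
      ultimately show ?thesis using that by blast
    next
      case False
      have "\<And>x. 0 < x \<Longrightarrow> x < x0 + 1 \<Longrightarrow> ?v - \<epsilon> < f x" using fpos False by fastforce
      then show ?thesis using that[of "x0 + 1"] by auto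
    qed
    show "\<exists>d>0. \<forall>x'. dist x' x0 < d \<longrightarrow> dist (f x') (f x0) < \<epsilon>"
    proof (intro exI[of _ "min (x0 - y2) (y1 - x0)"] conjI allI impI)
      show "0 < min (x0 - y2) (y1 - x0)" using y2x y1 by auto
      fix x' assume "dist x' x0 < min (x0 - y2) (y1 - x0)"
      then have xr: "y2 < x'" "x' < y1" by (auto simp: dist_real_def)
      have "f x' < ?v + \<epsilon>" using dec[OF y2(1) xr(1)] y2 by auto
      moreover have "?v - \<epsilon> < f x'" using y1(2)[of x'] xr y2 by auto
      ultimately show "dist (f x') (f x0) < \<epsilon>" by (auto simp: dist_real_def)
    qed
  qed
qed

lemma strict_convex_tangent:
  fixes f :: "real \<Rightarrow> real"
  assumes sc: "strictly_convex_on {0..} f"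
    and der: "(f has_real_derivative D) (at w0 within {0..})"
    and w0: "0 < w0" and w: "0 \<le> w" and ne: "w \<noteq> w0"
  shows "f w0 + D * (w - w0) < f w"
proof -
  have cv: "convex_on {0..} f"
  proof (rule convex_onI)
    fix t x y :: real assume t: "t > 0" "t < 1" and xy: "x \<in> {0..}" "y \<in> {0..}"
    show "f ((1 - t) *\<^sub>R x + t *\<^sub>R y) \<le> (1 - t) * f x + t * f y"
    proof (cases "x = y")
      case True then show ?thesis by (simp add: algebra_simps)
    next
      case False
      have "f ((1 - t) * x + (1 - (1 - t)) * y) < (1 - t) * f x + (1 - (1 - t)) * f y"
        using sc[unfolded strictly_convex_on_def, rule_format, of x y "1 - t"] xy False t by simp
      then show ?thesis by simp
    qed
  qed (simp add: convex_real_interval)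
  have int: "w0 \<in> interior {0..}" using w0 by simp
  have conn: "connected {0::real..}" by (simp add: is_interval_connected is_interval_ci)
  have tan: "D * (y - w0) \<le> f y - f w0" if "0 \<le> y" for y
    by (rule convex_on_imp_above_tangent[OF cv conn int _ der]) (use that in simp)
  define m where "m = (w0 + w) / 2"
  have m0: "0 \<le> m" using w0 w by (simp add: m_def)
  have "f ((1/2) * w0 + (1 - 1/2) * w) < (1/2) * f w0 + (1 - 1/2) * f w"
    using sc[unfolded strictly_convex_on_def, rule_format, of w0 w "1/2"] w0 w ne by simp
  then have "f m < (f w0 + f w) / 2" by (simp add: m_def field_simps)
  moreover have "D * (m - w0) \<le> f m - f w0" using tan[OF m0] .
  ultimately show ?thesis by (simp add: m_def field_simps)
qed

lemma strict_concave_tangent: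
  fixes f :: "real \<Rightarrow> real"
  assumes sc: "strictly_concave_on {0..} f"
    and der: "(f has_real_derivative D) (at w0)"
    and w0: "0 < w0" and w: "0 \<le> w" and ne: "w \<noteq> w0"
  shows "f w < f w0 + D * (w - w0)"
proof -
  have "strictly_convex_on {0..} (\<lambda>x. - f x)"
    unfolding strictly_convex_on_def proof (intro ballI allI impI)
    fix x y a :: real assume "x \<in> {0..}" "y \<in> {0..}" "x \<noteq> y \<and> 0 < a \<and> a < 1"
    then show "- f (a * x + (1 - a) * y) < a * - f x + (1 - a) * - f y"
      using sc[unfolded strictly_concave_on_def, rule_format, of x y a] by simp
  qed
  moreover have "((\<lambda>x. - f x) has_real_derivative - D) (at w0 within {0..})"
    using DERIV_minus[OF der] by (rule has_field_derivative_at_within)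
  ultimately have "- f w0 + (- D) * (w - w0) < - f w"
    by (rule strict_convex_tangent[OF _ _ w0 w ne])
  then show ?thesis by simp
qed


locale setting =
  fixes T :: nat and Q \<pi> :: real
    and d r c p \<theta> \<beta> :: "nat \<Rightarrow> real"
    and u e u' e' :: "nat \<Rightarrow> real \<Rightarrow> real"
  assumes T_pos: "T \<ge> 1" and Q_pos: "Q > 0" and pi_pos: "\<pi> > 0"
    and params: "\<And>t. t \<in> {1..T} \<Longrightarrow>
       d t \<ge> 0 \<and> r t \<ge> 0 \<and> c t > 0 \<and> p t > 0 \<and> \<theta> t > 0 \<and> \<beta> t > 0"
    and u_cont: "\<And>t. t \<in> {1..T} \<Longrightarrow> continuous_on {0..} (u t)"
    and u_mono: "\<And>t. t \<in> {1..T} \<Longrightarrow> mono_on {0..} (u t)"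
    and u_conc: "\<And>t. t \<in> {1..T} \<Longrightarrow> strictly_concave_on {0..} (u t)"
    and u_deriv: "\<And>t x. t \<in> {1..T} \<Longrightarrow> 0 < x \<Longrightarrow> (u t has_real_derivative u' t x) (at x)"
    and u'_bij: "\<And>t. t \<in> {1..T} \<Longrightarrow> bij_betw (u' t) {0<..} {0<..}"
    and u'_decr: "\<And>t x y. t \<in> {1..T} \<Longrightarrow> 0 < x \<Longrightarrow> x < y \<Longrightarrow> u' t y < u' t x"
    and e_mono: "\<And>t. t \<in> {1..T} \<Longrightarrow> mono_on {0..} (e t)"
    and e_conv: "\<And>t. t \<in> {1..T} \<Longrightarrow> strictly_convex_on {0..} (e t)"
    and e_deriv: "\<And>t x. t \<in> {1..T} \<Longrightarrow> 0 \<le> x \<Longrightarrow>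
                    (e t has_real_derivative e' t x) (at x within {0..})"
    and e'_cont: "\<And>t. t \<in> {1..T} \<Longrightarrow> continuous_on {0..} (e' t)"
    and e'_bij: "\<And>t. t \<in> {1..T} \<Longrightarrow> bij_betw (e' t) {0..} {0..}"
    and e'_incr: "\<And>t. t \<in> {1..T} \<Longrightarrow> strict_mono_on {0..} (e' t)"
begin

abbreviation "K t l \<equiv> p t * c t + r t * l"
abbreviation "af t l \<equiv> a_fn e' p c r t (\<beta> t) l"
abbreviation "Wf t l \<equiv> W u' e' p c d r \<theta> \<beta> t l"

context
  fixes t assumes t: "t \<in> {1..T}"
begin

lemma pos: "d t \<ge> 0" "r t \<ge> 0" "c t > 0" "p t > 0" "\<theta> t > 0" "\<beta> t > 0"
  using params[OF t] by auto

lemma e'_less: "0 \<le> x \<Longrightarrow> 0 \<le> y \<Longrightarrow> x < y \<Longrightarrow> e' t x < e' t y"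
  by (rule strict_mono_onD[OF e'_incr[OF t]]) auto

lemma e'_less_iff: "0 \<le> x \<Longrightarrow> 0 \<le> y \<Longrightarrow> e' t x < e' t y \<longleftrightarrow> x < y"
  using e'_less by (metis less_imp_not_less not_less_iff_gr_or_eq)

lemma e'_le_iff: "0 \<le> x \<Longrightarrow> 0 \<le> y \<Longrightarrow> e' t x \<le> e' t y \<longleftrightarrow> x \<le> y"
  using e'_less_iff by (meson not_le)

lemma e'_nonneg: "0 \<le> x \<Longrightarrow> 0 \<le> e' t x"
  using e'_bij[OF t] by (auto simp: bij_betw_def)

lemma e'_inv: "0 \<le> y \<Longrightarrow> 0 \<le> inv_into {0..} (e' t) y \<and> e' t (inv_into {0..} (e' t) y) = y"
proof -
  assume "0 \<le> y"
  then have "y \<in> e' t ` {0..}" using e'_bij[OF t] by (auto simp: bij_betw_def)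
  then show ?thesis using inv_into_into[of y "e' t" "{0..}"] f_inv_into_f[of y "e' t" "{0..}"] by auto
qed

lemma e'_zero: "e' t 0 = 0"
proof -
  obtain y where y: "0 \<le> y" "e' t y = 0" using e'_inv[of 0] by auto
  show ?thesis
  proof (cases "y = 0")
    case False
    then have "e' t 0 < e' t y" using e'_less[of 0 y] y by auto
    then show ?thesis using e'_nonneg[of 0] y by auto
  qed (use y in auto)
qed

lemma u'_pos: "0 < x \<Longrightarrow> 0 < u' t x"
  using u'_bij[OF t] by (auto simp: bij_betw_def)

lemma u'_inv: "0 < y \<Longrightarrow> 0 < inv_into {0<..} (u' t) y \<and> u' t (inv_into {0<..} (u' t) y) = y"
proof -
  assume "0 < y"
  then have "y \<in> u' t ` {0<..}" using u'_bij[OF t] by (auto simp: bij_betw_def)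
  then show ?thesis using inv_into_into[of y "u' t" "{0<..}"] f_inv_into_f[of y "u' t" "{0<..}"] by auto
qed

lemma u'_le_iff: "0 < x \<Longrightarrow> 0 < y \<Longrightarrow> u' t x \<le> u' t y \<longleftrightarrow> y \<le> x"
  using u'_decr[OF t] by (metis less_le_not_le linorder_le_less_linear order_le_less)

lemma u'_less_iff: "0 < x \<Longrightarrow> 0 < y \<Longrightarrow> u' t x < u' t y \<longleftrightarrow> y < x"
  using u'_le_iff by (meson not_le)

lemma K_pos: "0 \<le> l \<Longrightarrow> 0 < K t l"
  using pos by (simp add: add_pos_nonneg)

lemma a_props: assumes l: "0 \<le> l"
  shows "0 < af t l" "e' t (af t l * c t) = K t l / (\<beta> t * c t)"
proof -
  define y where "y = K t l / (\<beta> t * c t)"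
  have y: "0 < y" using K_pos[OF l] pos by (simp add: y_def)
  define w where "w = inv_into {0..} (e' t) y"
  have w: "0 \<le> w" "e' t w = y" using e'_inv[of y] y by (auto simp: w_def)
  have "w \<noteq> 0" using w y e'_zero by auto
  have aw: "af t l = w / c t" by (simp add: a_fn_def w_def y_def)
  show "0 < af t l" using aw w \<open>w \<noteq> 0\<close> pos by simp
  show "e' t (af t l * c t) = K t l / (\<beta> t * c t)" using aw w pos by (simp add: y_def)
qed

lemma a_le1_iff: assumes l: "0 \<le> l"
  shows "af t l \<le> 1 \<longleftrightarrow> K t l \<le> \<beta> t * c t * e' t (c t)"
proof -
  have "af t l \<le> 1 \<longleftrightarrow> af t l * c t \<le> c t" using pos by simp
  also have "\<dots> \<longleftrightarrow> e' t (af t l * c t) \<le> e' t (c t)"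
    using e'_le_iff a_props(1)[OF l] pos by simp
  also have "\<dots> \<longleftrightarrow> K t l / (\<beta> t * c t) \<le> e' t (c t)" using a_props(2)[OF l] by simp
  also have "\<dots> \<longleftrightarrow> K t l \<le> \<beta> t * c t * e' t (c t)"
    using pos by (simp add: pos_divide_le_eq mult.commute mult.left_commute)
  finally show ?thesis .
qed

lemma e'c_pos: "0 < e' t (c t)"
  using e'_less[of 0 "c t"] e'_zero pos by auto

lemma u'1_pos: "0 < u' t 1" using u'_pos by simp

lemma X_eq: "X_fn p c d r t l = K t l + d t * l"
  by (simp add: X_fn_def algebra_simps)

lemma regI_iff: "Omega_I u' e' p c d r t l (\<beta> t) (\<theta> t) \<longleftrightarrow>
   \<beta> t * c t * e' t (c t) + d t * l < \<theta> t * u' t 1 \<and> \<beta> t * c t * e' t (c t) < K t l"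
  using pos e'c_pos u'1_pos
  by (simp add: Omega_I_def pos_divide_less_eq pos_less_divide_eq mult.commute mult.left_commute)

lemma regII_iff: "Omega_II u' e' p c d r t l (\<beta> t) (\<theta> t) \<longleftrightarrow>
   K t l + d t * l < \<theta> t * u' t 1 \<and> K t l \<le> \<beta> t * c t * e' t (c t)"
  using pos e'c_pos u'1_pos
  by (simp add: Omega_II_def X_eq pos_divide_less_eq pos_divide_le_eq mult.commute mult.left_commute)

lemma regIII_iff: assumes l: "0 \<le> l" shows "Omega_III u' e' p c d r t l (\<beta> t) (\<theta> t) \<longleftrightarrow>
   K t l + d t * l \<le> \<theta> t * u' t (af t l) \<and> \<theta> t * u' t 1 \<le> K t l + d t * l"
  using pos u'1_pos u'_pos[OF a_props(1)[OF l]]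
  by (simp add: Omega_III_def X_eq pos_divide_le_eq pos_le_divide_eq mult.commute mult.left_commute)

lemma regIV_iff: assumes l: "0 \<le> l" shows "Omega_IV u' e' p c d r t l (\<beta> t) (\<theta> t) \<longleftrightarrow>
   \<theta> t * u' t (af t l) < K t l + d t * l \<and> \<theta> t * u' t 1 \<le> \<beta> t * c t * e' t (c t) + d t * l"
  using pos u'1_pos u'_pos[OF a_props(1)[OF l]]
  by (simp add: Omega_IV_def X_eq pos_less_divide_eq pos_le_divide_eq mult.commute mult.left_commute)

lemma regions_exhaust: assumes l: "0 \<le> l"
  shows "Omega_I u' e' p c d r t l (\<beta> t) (\<theta> t) \<or> Omega_II u' e' p c d r t l (\<beta> t) (\<theta> t) \<or>
         Omega_III u' e' p c d r t l (\<beta> t) (\<theta> t) \<or> Omega_IV u' e' p c d r t l (\<beta> t) (\<theta> t)"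
proof -
  let ?B = "\<beta> t * c t * e' t (c t)"
  have a0: "0 < af t l" using a_props(1)[OF l] .
  show ?thesis
  proof (cases "?B < K t l")
    case True
    then have "1 < af t l" using a_le1_iff[OF l] by linarith
    then have "u' t (af t l) < u' t 1" using u'_decr[OF t, of 1 "af t l"] by simp
    then have "\<theta> t * u' t (af t l) < \<theta> t * u' t 1" using pos by simp
    then show ?thesis using True unfolding regI_iff regIV_iff[OF l] by linarith
  next
    case False
    then have "af t l \<le> 1" using a_le1_iff[OF l] by linarith
    then have "u' t 1 \<le> u' t (af t l)" using u'_le_iff a0 by simp
    then have "\<theta> t * u' t 1 \<le> \<theta> t * u' t (af t l)" using pos by simp
    then show ?thesis using False unfolding regII_iff regIII_iff[OF l] regIV_iff[OF l] by linarith
  qed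
qed

lemma u'_isCont: "0 < x \<Longrightarrow> isCont (u' t) x"
  by (rule decr_bij_isCont[OF u'_bij[OF t]]) (auto intro: u'_decr[OF t])

lemma xIV_props: assumes l: "0 \<le> l" and h: "\<theta> t * u' t 1 \<le> \<beta> t * c t * e' t (c t) + d t * l"
  shows "0 < xIV u' e' c d \<theta> \<beta> t l \<and> xIV u' e' c d \<theta> \<beta> t l \<le> 1 \<and>
    \<theta> t * u' t (xIV u' e' c d \<theta> \<beta> t l) - \<beta> t * c t * e' t (xIV u' e' c d \<theta> \<beta> t l * c t) = d t * l"
proof -
  define g where "g x = \<theta> t * u' t x - \<beta> t * c t * e' t (x * c t)" for x
  have gdec: "g y < g x" if "0 < x" "x < y" for x y
  proof -
    have "u' t y < u' t x" using u'_decr[OF t that] .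
    moreover have "e' t (x * c t) < e' t (y * c t)" using e'_less that pos by simp
    ultimately show ?thesis using pos unfolding g_def
      by (simp add: add_strict_mono mult_strict_left_mono diff_strict_mono)
  qed
  define M where "M = (\<beta> t * c t * e' t (c t) + d t * l + 1) / \<theta> t"
  have Mpos: "0 < M" using pos e'c_pos l by (simp add: M_def add_nonneg_pos)
  define x1 where "x1 = inv_into {0<..} (u' t) M"
  have x1: "0 < x1" "u' t x1 = M" using u'_inv[OF Mpos] by (auto simp: x1_def)
  have x1lt: "x1 < 1"
  proof (rule ccontr)
    assume "\<not> x1 < 1"
    then have "u' t x1 \<le> u' t 1" using u'_le_iff[of x1 1] x1 by simp
    then have "\<theta> t * M \<le> \<theta> t * u' t 1" using x1 pos by simp
    moreover have "\<theta> t * M = \<beta> t * c t * e' t (c t) + d t * l + 1" using pos by (simp add: M_def)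
    ultimately show False using h by linarith
  qed
  have "e' t (x1 * c t) < e' t (c t)" using e'_less x1 x1lt pos by simp
  then have "\<beta> t * c t * e' t (x1 * c t) < \<beta> t * c t * e' t (c t)" using pos by simp
  moreover have "\<theta> t * u' t x1 = \<beta> t * c t * e' t (c t) + d t * l + 1" using pos x1 by (simp add: M_def)
  ultimately have g1: "d t * l \<le> g x1" unfolding g_def by linarith
  have g2: "g 1 \<le> d t * l" using h unfolding g_def by simp
  have cont: "\<forall>x. x1 \<le> x \<and> x \<le> 1 \<longrightarrow> isCont g x"
  proof (intro allI impI)
    fix x assume "x1 \<le> x \<and> x \<le> 1"
    then have x: "0 < x" using x1 by linarith
    have ec: "isCont (e' t) (x * c t)"
      by (rule continuous_on_interior[OF e'_cont[OF t]]) (use x pos in simp)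
    have "isCont (\<lambda>x. e' t (x * c t)) x"
      using isCont_o2[where f="\<lambda>x. x * c t" and a=x and g="e' t"] ec by (simp add: continuous_intros)
    then show "isCont g x" unfolding g_def using u'_isCont[OF x]
      by (intro continuous_intros) auto
  qed
  obtain x where x: "x1 \<le> x" "x \<le> 1" "g x = d t * l" using IVT2[OF g2 g1 _ cont] x1lt by auto
  have ex: "\<exists>!x. 0 < x \<and> x \<le> 1 \<and> g x = d t * l"
  proof (rule ex1I[of _ x])
    show "0 < x \<and> x \<le> 1 \<and> g x = d t * l" using x x1 by auto
    fix y assume "0 < y \<and> y \<le> 1 \<and> g y = d t * l"
    then show "y = x" using gdec[of x y] gdec[of y x] x x1 by (metis less_le_trans not_less_iff_gr_or_eq)
  qed
  have "xIV u' e' c d \<theta> \<beta> t l = (THE x. 0 < x \<and> x \<le> 1 \<and> g x = d t * l)"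
    by (simp add: xIV_def g_def)
  then show ?thesis using theI'[OF ex] unfolding g_def by simp
qed

definition "kkt_t l x0 z0 \<longleftrightarrow> 0 \<le> z0 \<and> z0 < x0 \<and> x0 \<le> 1 \<and>
   (\<exists>\<mu> \<kappa>. 0 \<le> \<mu> \<and> 0 \<le> \<kappa> \<and>
     \<theta> t * u' t x0 - \<beta> t * c t * e' t ((x0 - z0) * c t) - \<kappa> - l * d t = 0 \<and>
     \<beta> t * c t * e' t ((x0 - z0) * c t) - p t * c t + \<mu> - l * r t = 0 \<and>
     \<mu> * z0 = 0 \<and> \<kappa> * (1 - x0) = 0)"

lemma W_kkt: assumes l: "0 \<le> l"
  shows "kkt_t l (fst (Wf t l)) (snd (Wf t l))"
proof -
  let ?B = "\<beta> t * c t * e' t (c t)"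
  have a0: "0 < af t l" and ea: "e' t (af t l * c t) = K t l / (\<beta> t * c t)" using a_props[OF l] by auto
  have Ba: "\<beta> t * c t * e' t (af t l * c t) = K t l" using ea pos by simp
  consider (I) "Omega_I u' e' p c d r t l (\<beta> t) (\<theta> t)"
    | (II) "\<not> Omega_I u' e' p c d r t l (\<beta> t) (\<theta> t)" "Omega_II u' e' p c d r t l (\<beta> t) (\<theta> t)"
    | (III) "\<not> Omega_I u' e' p c d r t l (\<beta> t) (\<theta> t)" "\<not> Omega_II u' e' p c d r t l (\<beta> t) (\<theta> t)"
          "Omega_III u' e' p c d r t l (\<beta> t) (\<theta> t)"
    | (IV) "\<not> Omega_I u' e' p c d r t l (\<beta> t) (\<theta> t)" "\<not> Omega_II u' e' p c d r t l (\<beta> t) (\<theta> t)"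
          "\<not> Omega_III u' e' p c d r t l (\<beta> t) (\<theta> t)" "Omega_IV u' e' p c d r t l (\<beta> t) (\<theta> t)"
    using regions_exhaust[OF l] by blast
  then show ?thesis
  proof cases
    case I
    then have W: "Wf t l = (1, 0)" by (simp add: W_def)
    have h: "?B + d t * l < \<theta> t * u' t 1" "?B < K t l" using I regI_iff by auto
    show ?thesis unfolding W kkt_t_def
      by (rule conjI, simp, rule conjI, simp, rule conjI, simp,
          rule exI[of _ "K t l - ?B"], rule exI[of _ "\<theta> t * u' t 1 - ?B - d t * l"])
         (use h in \<open>auto simp: algebra_simps\<close>)
  next
    case II
    then have W: "Wf t l = (1, 1 - af t l)" by (simp add: W_def)
    have h: "K t l + d t * l < \<theta> t * u' t 1" "K t l \<le> ?B" using II regII_iff by auto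
    have a1: "af t l \<le> 1" using a_le1_iff[OF l] h by simp
    show ?thesis unfolding W kkt_t_def
      by (rule conjI, use a1 in simp, rule conjI, use a0 in simp, rule conjI, simp,
          rule exI[of _ 0], rule exI[of _ "\<theta> t * u' t 1 - K t l - d t * l"])
         (use h Ba in \<open>auto simp: algebra_simps\<close>)
  next
    case III
    define x0 where "x0 = inv_into {0<..} (u' t) (X_fn p c d r t l / \<theta> t)"
    have W: "Wf t l = (x0, x0 - af t l)" using III by (simp add: W_def x0_def Let_def)
    have Xp: "0 < X_fn p c d r t l / \<theta> t" using K_pos[OF l] pos l by (simp add: X_eq add_pos_nonneg)
    have x0: "0 < x0" "u' t x0 = X_fn p c d r t l / \<theta> t" using u'_inv[OF Xp] by (auto simp: x0_def)
    have tx: "\<theta> t * u' t x0 = K t l + d t * l" using x0 pos by (simp add: X_eq)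
    have h: "K t l + d t * l \<le> \<theta> t * u' t (af t l)" "\<theta> t * u' t 1 \<le> K t l + d t * l"
      using III regIII_iff[OF l] by auto
    have "u' t x0 \<le> u' t (af t l)" using h tx pos by (metis mult_le_cancel_left_pos)
    then have ax: "af t l \<le> x0" using u'_le_iff[of x0 "af t l"] x0 a0 by simp
    have "u' t 1 \<le> u' t x0" using h tx pos by (metis mult_le_cancel_left_pos)
    then have x1: "x0 \<le> 1" using u'_le_iff[of 1 x0] x0 by simp
    show ?thesis unfolding W kkt_t_def
      by (rule conjI, use ax in simp, rule conjI, use a0 in simp, rule conjI, use x1 in simp,
          rule exI[of _ 0], rule exI[of _ 0])
         (use tx Ba in \<open>auto simp: algebra_simps\<close>)
  next
    case IV
    define x0 where "x0 = xIV u' e' c d \<theta> \<beta> t l"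
    have W: "Wf t l = (x0, 0)" using IV by (simp add: W_def x0_def)
    have h: "\<theta> t * u' t (af t l) < K t l + d t * l" "\<theta> t * u' t 1 \<le> ?B + d t * l"
      using IV regIV_iff[OF l] by auto
    have x0: "0 < x0" "x0 \<le> 1" "\<theta> t * u' t x0 - \<beta> t * c t * e' t (x0 * c t) = d t * l"
      using xIV_props[OF l h(2)] by (auto simp: x0_def)
    have mu: "\<beta> t * c t * e' t (x0 * c t) \<le> K t l"
    proof (rule ccontr)
      assume neg: "\<not> \<beta> t * c t * e' t (x0 * c t) \<le> K t l"
      then have "(\<beta> t * c t) * e' t (af t l * c t) < (\<beta> t * c t) * e' t (x0 * c t)" using Ba by linarith
      moreover have "0 < \<beta> t * c t" using pos by simp
      ultimately have "e' t (af t l * c t) < e' t (x0 * c t)" using mult_less_cancel_left_pos by blast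
      then have "af t l * c t < x0 * c t" using e'_less_iff a0 x0 pos by simp
      then have "af t l < x0" using pos by simp
      then have "u' t x0 < u' t (af t l)" using u'_decr[OF t a0] by simp
      then have "\<theta> t * u' t x0 < \<theta> t * u' t (af t l)" using pos by simp
      then show False using x0(3) h(1) neg by linarith
    qed
    show ?thesis unfolding W kkt_t_def
      by (rule conjI, simp, rule conjI, use x0 in simp, rule conjI, use x0 in simp,
          rule exI[of _ "K t l - \<beta> t * c t * e' t (x0 * c t)"], rule exI[of _ 0])
         (use x0 mu in \<open>auto simp: algebra_simps\<close>)
  qed
qed

definition "phi l x z = \<theta> t * u t x - \<beta> t * e t ((x - z) * c t) - p t * c t * z - l * (d t * x + r t * z)"

lemma W_in_D: assumes l: "0 \<le> l"
  shows "0 \<le> snd (Wf t l) \<and> snd (Wf t l) \<le> fst (Wf t l) \<and> fst (Wf t l) \<le> 1"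
  using W_kkt[OF l] unfolding kkt_t_def by auto

lemma W_argmax: assumes l: "0 \<le> l" and xz: "0 \<le> z" "z \<le> x" "x \<le> 1"
  shows "phi l x z \<le> phi l (fst (Wf t l)) (snd (Wf t l))"
    and "(x, z) \<noteq> Wf t l \<Longrightarrow> phi l x z < phi l (fst (Wf t l)) (snd (Wf t l))"
proof -
  define x0 where "x0 = fst (Wf t l)"
  define z0 where "z0 = snd (Wf t l)"
  have Weq: "Wf t l = (x0, z0)" by (simp add: x0_def z0_def)
  obtain \<mu> \<kappa> where k: "0 \<le> z0" "z0 < x0" "x0 \<le> 1" "0 \<le> \<mu>" "0 \<le> \<kappa>"
     "\<theta> t * u' t x0 - \<beta> t * c t * e' t ((x0 - z0) * c t) - \<kappa> - l * d t = 0"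
     "\<beta> t * c t * e' t ((x0 - z0) * c t) - p t * c t + \<mu> - l * r t = 0"
     "\<mu> * z0 = 0" "\<kappa> * (1 - x0) = 0"
    using W_kkt[OF l] unfolding kkt_t_def x0_def[symmetric] z0_def[symmetric] by blast
  define w where "w = x - z"
  define w0 where "w0 = x0 - z0"
  have w0p: "0 < w0" using k by (simp add: w0_def)
  have wn: "0 \<le> w" using xz by (simp add: w_def)
  define U where "U = u' t x0"
  define E where "E = e' t (w0 * c t)"
  have x0p: "0 < x0" using k by linarith
  have hu: "u t x \<le> u t x0 + U * (x - x0)"
  proof (cases "x = x0")
    case False
    then show ?thesis using strict_concave_tangent[OF u_conc[OF t] u_deriv[OF t x0p] x0p _ False] xz
      by (simp add: U_def)
  qed simp
  have hus: "x \<noteq> x0 \<Longrightarrow> u t x < u t x0 + U * (x - x0)"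
    using strict_concave_tangent[OF u_conc[OF t] u_deriv[OF t x0p] x0p] xz by (simp add: U_def)
  have w0c: "0 < w0 * c t" using w0p pos by simp
  have wc: "0 \<le> w * c t" using wn pos by simp
  have eder: "(e t has_real_derivative E) (at (w0 * c t) within {0..})"
    unfolding E_def by (rule e_deriv[OF t]) (use w0c in simp)
  have hes: "w \<noteq> w0 \<Longrightarrow> e t (w0 * c t) + E * (w * c t - w0 * c t) < e t (w * c t)"
    using strict_convex_tangent[OF e_conv[OF t] eder w0c wc] pos by simp
  have he: "e t (w0 * c t) + E * (w * c t - w0 * c t) \<le> e t (w * c t)"
    using hes by (cases "w = w0") auto
  define \<Delta> where "\<Delta> = \<theta> t * U * (x - x0) - \<beta> t * E * (w * c t - w0 * c t) - p t * c t * (z - z0)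
      - l * (d t * (x - x0) + r t * (z - z0))"
  have eqA: "\<theta> t * U = \<beta> t * c t * E + \<kappa> + l * d t" using k(6) by (simp add: U_def E_def w0_def)
  have eqB: "\<beta> t * c t * E = p t * c t - \<mu> + l * r t" using k(7) by (simp add: E_def w0_def)
  have "\<Delta> = (\<theta> t * U) * (x - x0) - (\<beta> t * c t * E) * ((x - z) - (x0 - z0)) - p t * c t * (z - z0)
      - l * (d t * (x - x0) + r t * (z - z0))"
    by (simp add: \<Delta>_def w_def w0_def algebra_simps)
  also have "\<dots> = \<kappa> * (x - x0) - \<mu> * (z - z0)"
    unfolding eqA eqB by (simp add: algebra_simps)
  finally have "\<Delta> = \<kappa> * x - \<kappa> * x0 - \<mu> * z + \<mu> * z0"
    by (simp add: algebra_simps)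
  moreover have "\<kappa> * x0 = \<kappa>" using k(9) by (simp add: algebra_simps)
  ultimately have D: "\<Delta> = \<kappa> * x - \<kappa> - \<mu> * z" using k(8) by linarith
  have "\<kappa> * x \<le> \<kappa>" using k(5) xz by (simp add: mult_left_le)
  moreover have "0 \<le> \<mu> * z" using k(4) xz by simp
  ultimately have Dn: "\<Delta> \<le> 0" using D by linarith
  have diff: "phi l x z - phi l x0 z0 = \<theta> t * (u t x - u t x0) - \<beta> t * (e t (w * c t) - e t (w0 * c t))
     - p t * c t * (z - z0) - l * (d t * (x - x0) + r t * (z - z0))"
    by (simp add: phi_def w_def w0_def algebra_simps)
  have tu: "\<theta> t * (u t x - u t x0) \<le> \<theta> t * U * (x - x0)"
    using hu pos by (simp add: mult.assoc)
  have be: "\<beta> t * E * (w * c t - w0 * c t) \<le> \<beta> t * (e t (w * c t) - e t (w0 * c t))"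
    using he pos by (simp add: mult.assoc)
  show "phi l x z \<le> phi l (fst (Wf t l)) (snd (Wf t l))"
    using diff tu be Dn unfolding Weq \<Delta>_def by simp
  assume ne: "(x, z) \<noteq> Wf t l"
  then have "x \<noteq> x0 \<or> w \<noteq> w0" unfolding Weq w_def w0_def by auto
  then show "phi l x z < phi l (fst (Wf t l)) (snd (Wf t l))"
  proof
    assume "x \<noteq> x0"
    then have "\<theta> t * (u t x - u t x0) < \<theta> t * U * (x - x0)"
      using hus pos by (simp add: mult.assoc)
    then show ?thesis using diff be Dn unfolding Weq \<Delta>_def by simp
  next
    assume "w \<noteq> w0"
    then have "\<beta> t * E * (w * c t - w0 * c t) < \<beta> t * (e t (w * c t) - e t (w0 * c t))"
      using hes pos by (simp add: mult.assoc)
    then show ?thesis using diff tu Dn unfolding Weq \<Delta>_def by simp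
  qed
qed

lemma e_cont: "continuous_on {0..} (e t)"
  unfolding continuous_on_eq_continuous_within
  using DERIV_continuous[OF e_deriv[OF t]] by simp

definition "Dset = {y::real\<times>real. 0 \<le> snd y \<and> snd y \<le> fst y \<and> fst y \<le> 1}"

lemma Dset_closed: "closed Dset"
  unfolding Dset_def by (intro closed_Collect_conj closed_Collect_le continuous_intros)

lemma Dset_compact: "compact Dset"
proof -
  have "Dset = ({0..1} \<times> {0..1}) \<inter> Dset" by (auto simp: Dset_def)
  moreover have "compact (({0..1::real} \<times> {0..1::real}) \<inter> Dset)"
    by (rule compact_Int_closed[OF compact_Times[OF compact_Icc compact_Icc] Dset_closed])
  ultimately show ?thesis by simp
qed

lemma phi_cont: "continuous_on ({0..} \<times> Dset) (\<lambda>q. phi (fst q) (fst (snd q)) (snd (snd q)))"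
proof -
  have c1: "continuous_on ({0..} \<times> Dset) (\<lambda>q. u t (fst (snd q)))"
    by (rule continuous_on_compose2[OF u_cont[OF t]]) (auto intro!: continuous_intros simp: Dset_def)
  have c2: "continuous_on ({0..} \<times> Dset) (\<lambda>q. e t ((fst (snd q) - snd (snd q)) * c t))"
    by (rule continuous_on_compose2[OF e_cont]) (use pos in \<open>auto intro!: continuous_intros simp: Dset_def\<close>)
  show ?thesis unfolding phi_def
    by (intro continuous_intros c1 c2)
qed

lemma phi_cont2: "continuous_on ({0..} \<times> Dset) (\<lambda>q. phi (fst q) a b)"
  unfolding phi_def by (intro continuous_intros)

lemma W_cont: "continuous_on {0..} (Wf t)"
proof -
  have fim: "Wf t \<in> {0..} \<rightarrow> Dset" using W_in_D by (auto simp: Dset_def)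
  define g where "g y' q = phi (fst q) (fst (snd q)) (snd (snd q)) - phi (fst q) (fst y') (snd y')" for y' q
  have gc: "continuous_on ({0..} \<times> Dset) (g y')" for y'
    unfolding g_def by (intro continuous_intros phi_cont phi_cont2)
  have "(0,0) \<in> Dset" by (simp add: Dset_def)
  then have ne: "Dset \<noteq> {}" by auto
  have eq: "(\<lambda>l. (l, Wf t l)) ` {0..} = (\<Inter>y'\<in>Dset. ({0..} \<times> Dset) \<inter> g y' -` {0..})"
  proof (intro equalityI subsetI)
    fix q assume "q \<in> (\<lambda>l. (l, Wf t l)) ` {0..}"
    then obtain l where l: "0 \<le> l" "q = (l, Wf t l)" by auto
    show "q \<in> (\<Inter>y'\<in>Dset. ({0..} \<times> Dset) \<inter> g y' -` {0..})"
      using l fim W_argmax(1)[OF l(1)] by (auto simp: g_def Dset_def)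
  next
    fix q assume q: "q \<in> (\<Inter>y'\<in>Dset. ({0..} \<times> Dset) \<inter> g y' -` {0..})"
    obtain l y where qd: "q = (l, y)" by (cases q)
    have l: "0 \<le> l" and y: "y \<in> Dset" using q ne qd by auto
    have WD: "Wf t l \<in> Dset" using fim l by auto
    have "q \<in> ({0..} \<times> Dset) \<inter> g (Wf t l) -` {0..}" using q WD by blast
    then have ge: "phi l (fst (Wf t l)) (snd (Wf t l)) \<le> phi l (fst y) (snd y)"
      using qd by (auto simp: g_def)
    have "y = Wf t l"
    proof (rule ccontr)
      assume "y \<noteq> Wf t l"
      then have "phi l (fst y) (snd y) < phi l (fst (Wf t l)) (snd (Wf t l))"
        using W_argmax(2)[OF l, of "snd y" "fst y"] y by (auto simp: Dset_def)
      then show False using ge by simp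
    qed
    then show "q \<in> (\<lambda>l. (l, Wf t l)) ` {0..}" using qd l by auto
  qed
  have "closedin (top_of_set ({0..} \<times> Dset)) ((\<lambda>l. (l, Wf t l)) ` {0..})"
    unfolding eq
    by (intro closedin_INT ne continuous_closedin_preimage gc) auto
  then show ?thesis using continuous_closed_graph_eq[OF Dset_compact fim] by simp
qed


end

abbreviation "Af l \<equiv> A_fn T u' e' p c d r \<theta> \<beta> l"

lemma A_cont: "continuous_on {0..} (\<lambda>l. Af l)"
  unfolding A_fn_def h_fn_def
  by (intro continuous_on_sum continuous_intros continuous_on_fst continuous_on_snd W_cont) auto

lemma main:
  "let lam = lambda_star T Q \<pi> u' e' p c d r \<theta> \<beta>;
       x = (\<lambda>t. fst (W u' e' p c d r \<theta> \<beta> t lam));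
       z = (\<lambda>t. snd (W u' e' p c d r \<theta> \<beta> t lam));
       s = max 0 ((\<Sum>t=1..T. h_fn d r t (x t, z t)) - Q)
   in \<exists>mu nu kappa rho. is_KKT T Q \<pi> u' e' p c d r \<theta> \<beta> x z s mu nu kappa rho lam"
proof -
  define S where "S = {l::real. 0 \<le> l \<and> Af l \<le> Q}"
  define lam where "lam = lambda_star T Q \<pi> u' e' p c d r \<theta> \<beta>"
  have lam_def2: "lam = (if S = {} then \<pi> else min \<pi> (Inf S))"
    unfolding lam_def lambda_star_def S_def Let_def by simp
  have bdd: "bdd_below S" by (auto simp: S_def bdd_below_def)
  have Sclosed: "closed S"
  proof -
    have "S = {0..} \<inter> (\<lambda>l. Af l) -` {..Q}" by (auto simp: S_def)
    then show ?thesis using continuous_closed_preimage[OF A_cont] by simp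
  qed
  have InfS: "S \<noteq> {} \<Longrightarrow> Inf S \<in> S" using closed_contains_Inf[OF _ bdd Sclosed] by simp
  have InfS0: "S \<noteq> {} \<Longrightarrow> 0 \<le> Inf S" using InfS by (simp add: S_def)
  have lam0: "0 \<le> lam" using InfS0 pi_pos by (auto simp: lam_def2)
  have lampi: "lam \<le> \<pi>" by (auto simp: lam_def2)
  have A1: "lam < \<pi> \<Longrightarrow> Af lam \<le> Q"
  proof -
    assume "lam < \<pi>"
    then have ne: "S \<noteq> {}" and "lam = Inf S" by (auto simp: lam_def2 split: if_splits)
    then show ?thesis using InfS[OF ne] by (simp add: S_def)
  qed
  have A2: "0 < lam \<Longrightarrow> Q \<le> Af lam"
  proof (rule ccontr)
    assume lp: "0 < lam" and "\<not> Q \<le> Af lam"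
    then have lt: "Af lam < Q" by simp
    obtain \<delta> where \<delta>: "\<delta> > 0" "\<And>l'. l' \<in> {0..} \<Longrightarrow> dist l' lam < \<delta> \<Longrightarrow> dist (Af l') (Af lam) < Q - Af lam"
      using A_cont[unfolded continuous_on_iff] lam0 lt by (metis atLeast_iff diff_gt_0_iff_gt)
    define l' where "l' = max 0 (lam - \<delta>/2)"
    have l'0: "0 \<le> l'" by (simp add: l'_def)
    have l'lt: "l' < lam" using lp \<delta> by (simp add: l'_def)
    have "dist l' lam < \<delta>" using lp \<delta> lam0 by (auto simp: l'_def dist_real_def)
    then have "dist (Af l') (Af lam) < Q - Af lam" using \<delta>(2) l'0 by simp
    then have "Af l' < Q" by (simp add: dist_real_def)
    then have l'S: "l' \<in> S" using l'0 by (simp add: S_def)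
    then have ne: "S \<noteq> {}" by auto
    have "Inf S \<le> l'" using cInf_lower[OF l'S bdd] .
    moreover have "lam \<le> Inf S" using ne by (simp add: lam_def2)
    ultimately show False using l'lt by simp
  qed
  define x where "x = (\<lambda>t. fst (Wf t lam))"
  define z where "z = (\<lambda>t. snd (Wf t lam))"
  define H where "H = (\<Sum>t=1..T. h_fn d r t (x t, z t))"
  have HA: "H = Af lam" by (simp add: H_def A_fn_def x_def z_def)
  define s where "s = max 0 (H - Q)"
  have "\<forall>t\<in>{1..T}. \<exists>m. 0 \<le> fst m \<and> 0 \<le> snd m \<and>
     \<theta> t * u' t (x t) - \<beta> t * c t * e' t ((x t - z t) * c t) - snd m - lam * d t = 0 \<and>
     \<beta> t * c t * e' t ((x t - z t) * c t) - p t * c t + fst m - lam * r t = 0 \<and>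
     fst m * z t = 0 \<and> snd m * (1 - x t) = 0"
  proof
    fix t assume t: "t \<in> {1..T}"
    then show "\<exists>m. 0 \<le> fst m \<and> 0 \<le> snd m \<and>
     \<theta> t * u' t (x t) - \<beta> t * c t * e' t ((x t - z t) * c t) - snd m - lam * d t = 0 \<and>
     \<beta> t * c t * e' t ((x t - z t) * c t) - p t * c t + fst m - lam * r t = 0 \<and>
     fst m * z t = 0 \<and> snd m * (1 - x t) = 0"
      using W_kkt[OF t lam0] unfolding x_def z_def by (auto simp: kkt_t_def mult.commute)
  qed
  then obtain m where m: "\<forall>t\<in>{1..T}. 0 \<le> fst (m t) \<and> 0 \<le> snd (m t) \<and>
     \<theta> t * u' t (x t) - \<beta> t * c t * e' t ((x t - z t) * c t) - snd (m t) - lam * d t = 0 \<and>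
     \<beta> t * c t * e' t ((x t - z t) * c t) - p t * c t + fst (m t) - lam * r t = 0 \<and>
     fst (m t) * z t = 0 \<and> snd (m t) * (1 - x t) = 0"
    by (rule bchoice[elim_format]) blast
  have feas: "\<forall>t\<in>{1..T}. 0 \<le> z t \<and> z t \<le> x t \<and> x t \<le> 1"
    using W_in_D lam0 by (auto simp: x_def z_def)
  have rho: "(\<pi> - lam) * s = 0"
  proof (cases "lam < \<pi>")
    case True then show ?thesis using A1 HA by (simp add: s_def)
  qed (use lampi in simp)
  have lamc: "lam * (s - H + Q) = 0"
  proof (cases "0 < lam")
    case True then show ?thesis using A2 HA by (simp add: s_def)
  qed (use lam0 in simp)
  have "is_KKT T Q \<pi> u' e' p c d r \<theta> \<beta> x z s (\<lambda>t. fst (m t)) (\<lambda>t. 0) (\<lambda>t. snd (m t)) (\<pi> - lam) lam"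
    unfolding is_KKT_def H_def[symmetric]
    using feas m rho lamc lam0 lampi by (auto simp: s_def)
  then show ?thesis
    unfolding Let_def lam_def[symmetric] unfolding s_def H_def x_def z_def by blast
qed

end



theorem theorem1:
  fixes T :: nat and Q \<pi> :: real
    and d r c p \<theta> \<beta> :: "nat \<Rightarrow> real"
    and u e u' e' :: "nat \<Rightarrow> real \<Rightarrow> real"
  assumes T_pos: "T \<ge> 1" and Q_pos: "Q > 0" and pi_pos: "\<pi> > 0"
    and params: "\<And>t. t \<in> {1..T} \<Longrightarrow>
       d t \<ge> 0 \<and> r t \<ge> 0 \<and> c t > 0 \<and> p t > 0 \<and> \<theta> t > 0 \<and> \<beta> t > 0"
    and u_cont: "\<And>t. t \<in> {1..T} \<Longrightarrow> continuous_on {0..} (u t)"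
    and u_mono: "\<And>t. t \<in> {1..T} \<Longrightarrow> mono_on {0..} (u t)"
    and u_conc: "\<And>t. t \<in> {1..T} \<Longrightarrow> strictly_concave_on {0..} (u t)"
    and u_deriv: "\<And>t x. t \<in> {1..T} \<Longrightarrow> 0 < x \<Longrightarrow> (u t has_real_derivative u' t x) (at x)"
    and u'_bij: "\<And>t. t \<in> {1..T} \<Longrightarrow> bij_betw (u' t) {0<..} {0<..}"
    and u'_decr: "\<And>t x y. t \<in> {1..T} \<Longrightarrow> 0 < x \<Longrightarrow> x < y \<Longrightarrow> u' t y < u' t x"
    and e_mono: "\<And>t. t \<in> {1..T} \<Longrightarrow> mono_on {0..} (e t)"
    and e_conv: "\<And>t. t \<in> {1..T} \<Longrightarrow> strictly_convex_on {0..} (e t)"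
    and e_deriv: "\<And>t x. t \<in> {1..T} \<Longrightarrow> 0 \<le> x \<Longrightarrow>
                    (e t has_real_derivative e' t x) (at x within {0..})"
    and e'_cont: "\<And>t. t \<in> {1..T} \<Longrightarrow> continuous_on {0..} (e' t)"
    and e'_bij: "\<And>t. t \<in> {1..T} \<Longrightarrow> bij_betw (e' t) {0..} {0..}"
    and e'_incr: "\<And>t. t \<in> {1..T} \<Longrightarrow> strict_mono_on {0..} (e' t)"
  shows "let lam = lambda_star T Q \<pi> u' e' p c d r \<theta> \<beta>;
             x = (\<lambda>t. fst (W u' e' p c d r \<theta> \<beta> t lam));
             z = (\<lambda>t. snd (W u' e' p c d r \<theta> \<beta> t lam));
             s = max 0 ((\<Sum>t=1..T. h_fn d r t (x t, z t)) - Q)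
         in \<exists>mu nu kappa rho. is_KKT T Q \<pi> u' e' p c d r \<theta> \<beta> x z s mu nu kappa rho lam"
proof -
  interpret setting T Q \<pi> d r c p \<theta> \<beta> u e u' e'
    by (unfold_locales) (fact assms)+
  show ?thesis by (rule main)
qed


end
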